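(* Let $L_i,L_j$ be two of four general lines in $\mathbb P^2$, $P=L_i\cap L_j$, and let $f\colon Y\to\mathbb P^2$ be a composition of blowups at points of intersection of visible curves. Let $E,E'$ be two exceptional visible curves over $P$ with weights $(w_i,w_j)$ and $(w'_i,w'_j)$ (coefficients in $f^*L_i,f^*L_j$) such that $w_j/w_i<w'_j/w'_i$, and let $\Gamma$ be the chain of visible curves lying strictly between $E$ and $E'$ in the chain of visible curves over $P$, marked by $-C^2$. Then $$\det\Gamma=\begin{vmatrix}w_i&w_j\\ w'_i&w'_j\end{vmatrix}=\Big(\frac{w_i}{w_j}-\frac{w'_i}{w'_j}\Big)w_jw'_j.$$
   Context: Visible curves are the strict transforms of the lines and of all exceptional curves of the blowups; each blowup in $f$ is centered at an intersection point of two visible curves. The visible curves over $P$ together with the strict transforms of $L_i,L_j$ form a chain. The determinant of a chain with marks $a_1,\dots,a_k$ is the determinant of the tridiagonal matrix with diagonal $a_l$ and off-diagonal entries $-1$; the empty chain has determinant $1$. *)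

theory Defs
  imports Complex_Main "Jordan_Normal_Form.Determinant"
begin

text \<open>A curve in the chain is recorded as a triple (w_i, w_j, a): its weights, i.e. its
  coefficients in f^*L_i and f^*L_j, and its mark a = -C^2.  The chain is listed from
  the strict transform of L_i to the strict transform of L_j.\<close>

type_synonym vcurve = "nat \<times> nat \<times> int"

definition wi :: "vcurve \<Rightarrow> nat" where "wi c = fst c"
definition wj :: "vcurve \<Rightarrow> nat" where "wj c = fst (snd c)"
definition mark :: "vcurve \<Rightarrow> int" where "mark c = snd (snd c)"

text \<open>Chains over P obtainable from a composition of blowups at intersection points of
  visible curves.  Initially the chain is L_i, L_j (self-intersection 1, mark -1).
  A blowup at the intersection point of two adjacent curves of the chain inserts a
  (-1)-curve whose weights are the sums and lowers the self-intersections of the two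
  neighbours by one.  A blowup at a point of L_i (resp. L_j) not lying over P only
  lowers the self-intersection of that end curve; all other blowups do not touch the
  chain over P.\<close>

inductive chain_over_P :: "vcurve list \<Rightarrow> bool" where
  init: "chain_over_P [(1, 0, -1), (0, 1, -1)]"
| blowup: "chain_over_P (xs @ [(a, b, m), (c, d, n)] @ ys) \<Longrightarrow>
     chain_over_P (xs @ [(a, b, m + 1), (a + c, b + d, 1), (c, d, n + 1)] @ ys)"
| blowup_Li: "chain_over_P ((a, b, m) # xs) \<Longrightarrow> chain_over_P ((a, b, m + 1) # xs)"
| blowup_Lj: "chain_over_P (xs @ [(a, b, m)]) \<Longrightarrow> chain_over_P (xs @ [(a, b, m + 1)])"

definition chain_matrix :: "int list \<Rightarrow> int mat" where
  "chain_matrix as = mat (length as) (length as)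
     (\<lambda>(p, q). if p = q then as ! p else if p = q + 1 \<or> q = p + 1 then -1 else 0)"

definition chain_det :: "vcurve list \<Rightarrow> int" where
  "chain_det cs = det (chain_matrix (map mark cs))"

definition strictly_between :: "vcurve list \<Rightarrow> nat \<Rightarrow> nat \<Rightarrow> vcurve list" where
  "strictly_between cs k l = nths cs {min k l <..< max k l}"

end

theory Submission imports Defs begin

lemma nths_between:
  assumes a: "k < l" "l \<le> length cs"
  shows "nths cs {k<..<l} = map ((!) cs) [Suc k..<l]"
proof -
  have eq: "(+) (Suc k) ` {..<l - Suc k} = {k<..<l}"
  proof
    show "{k<..<l} \<subseteq> (+) (Suc k) ` {..<l - Suc k}"
    proof
      fix x assume x: "x \<in> {k<..<l}"
      then have "x = Suc k + (x - Suc k)" "x - Suc k \<in> {..<l - Suc k}" by auto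
      then show "x \<in> (+) (Suc k) ` {..<l - Suc k}" by blast
    qed
  next
    show "(+) (Suc k) ` {..<l - Suc k} \<subseteq> {k<..<l}" by auto
  qed
  have "nths cs {k<..<l} = nths (drop (Suc k) cs) {..<l - Suc k}"
    using nths_drop[of "Suc k" cs "{..<l - Suc k}"] eq by simp
  also have "\<dots> = take (l - Suc k) (drop (Suc k) cs)" by (rule nths_upt_eq_take)
  also have "\<dots> = map ((!) cs) [Suc k..<l]"
  proof (rule nth_equalityI)
    show "length (take (l - Suc k) (drop (Suc k) cs)) = length (map ((!) cs) [Suc k..<l])"
      using a by simp
    fix i assume "i < length (take (l - Suc k) (drop (Suc k) cs))"
    then show "take (l - Suc k) (drop (Suc k) cs) ! i = map ((!) cs) [Suc k..<l] ! i"
      using a by simp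
  qed
  finally show ?thesis .
qed

lemma strictly_between_eq:
  assumes a: "k < l" "l \<le> length cs"
  shows "strictly_between cs k l = map ((!) cs) [Suc k..<l]"
  using nths_between[OF a] a by (simp add: strictly_between_def min_def max_def)

lemma cm_carrier: "chain_matrix as \<in> carrier_mat (length as) (length as)"
  by (simp add: chain_matrix_def)

lemma det_chain_Nil: "det (chain_matrix []) = 1"
  by (simp add: chain_matrix_def det_def')

lemma cm_index: "p < length as \<Longrightarrow> q < length as \<Longrightarrow> chain_matrix as $$ (p, q) =
   (if p = q then as ! p else if p = q + 1 \<or> q = p + 1 then -1 else 0)"
  by (simp add: chain_matrix_def)

lemma det_chain_single: "det (chain_matrix [a]) = a"
proof -
  have "det (chain_matrix [a]) = (\<Sum>j<1. chain_matrix [a] $$ (0,j) * cofactor (chain_matrix [a]) 0 j)"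
    by (rule laplace_expansion_row) (use cm_carrier[of "[a]"] in auto)
  also have "\<dots> = a * det (mat_delete (chain_matrix [a]) 0 0)"
    by (simp add: cm_index cofactor_def)
  also have "mat_delete (chain_matrix [a]) 0 0 = chain_matrix []"
    by (rule eq_matI) (auto simp: mat_delete_def chain_matrix_def)
  finally show ?thesis by (simp add: det_chain_Nil)
qed

lemma det_chain_cons2: "det (chain_matrix (a # b # r)) = a * det (chain_matrix (b # r)) - det (chain_matrix r)"
proof -
  let ?M = "chain_matrix (a # b # r)"
  let ?n = "Suc (Suc (length r))"
  have M: "?M \<in> carrier_mat ?n ?n" using cm_carrier[of "a # b # r"] by simp
  have "det ?M = (\<Sum>j<?n. ?M $$ (0,j) * cofactor ?M 0 j)"
    by (rule laplace_expansion_row[OF M]) simp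
  also have "\<dots> = ?M $$ (0,0) * cofactor ?M 0 0 + ?M $$ (0,1) * cofactor ?M 0 1
      + (\<Sum>j<length r. ?M $$ (0,Suc (Suc j)) * cofactor ?M 0 (Suc (Suc j)))"
    by (simp add: sum.lessThan_Suc_shift del: sum.lessThan_Suc)
  also have "(\<Sum>j<length r. ?M $$ (0,Suc (Suc j)) * cofactor ?M 0 (Suc (Suc j))) = 0"
    by (rule sum.neutral) (auto simp: cm_index)
  finally have 0: "det ?M = ?M $$ (0,0) * cofactor ?M 0 0 + ?M $$ (0,1) * cofactor ?M 0 1" by simp
  have d: "mat_delete ?M 0 0 = chain_matrix (b # r)"
    by (rule eq_matI) (auto simp: mat_delete_def chain_matrix_def)
  have 1: "det ?M = a * det (chain_matrix (b # r)) + det (mat_delete ?M 0 1)"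
    using 0 d by (simp add: cm_index cofactor_def)
  let ?N = "mat_delete ?M 0 1"
  let ?m = "Suc (length r)"
  have N: "?N \<in> carrier_mat ?m ?m" using mat_delete_carrier[OF M] by simp
  have "det ?N = (\<Sum>i<?m. ?N $$ (i,0) * cofactor ?N i 0)"
    by (rule laplace_expansion_column[OF N]) simp
  also have "\<dots> = ?N $$ (0,0) * cofactor ?N 0 0 + (\<Sum>i<length r. ?N $$ (Suc i,0) * cofactor ?N (Suc i) 0)"
    by (simp add: sum.lessThan_Suc_shift del: sum.lessThan_Suc)
  also have "(\<Sum>i<length r. ?N $$ (Suc i,0) * cofactor ?N (Suc i) 0) = 0"
    by (rule sum.neutral) (auto simp: mat_delete_def chain_matrix_def)
  finally have 3: "det ?N = ?N $$ (0,0) * cofactor ?N 0 0" by simp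
  have d2: "mat_delete ?N 0 0 = chain_matrix r"
    by (rule eq_matI) (auto simp: mat_delete_def chain_matrix_def)
  have e: "?N $$ (0,0) = -1" by (simp add: mat_delete_def chain_matrix_def)
  have 2: "det ?N = - det (chain_matrix r)"
    using 3 d2 e by (simp add: cofactor_def)
  show ?thesis using 1 2 by simp
qed


definition cr :: "vcurve \<Rightarrow> vcurve \<Rightarrow> int" where
  "cr c d = int (wi c) * int (wj d) - int (wj c) * int (wi d)"

definition cinv :: "vcurve list \<Rightarrow> bool" where
  "cinv cs \<longleftrightarrow> 2 \<le> length cs \<and>
    (\<forall>p. Suc p < length cs \<longrightarrow> cr (cs!p) (cs!Suc p) = 1) \<and>
    (\<forall>p. 0 < p \<longrightarrow> Suc p < length cs \<longrightarrow>
        mark (cs!p) * int (wi (cs!p)) = int (wi (cs!(p-1))) + int (wi (cs!Suc p)) \<and>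
        mark (cs!p) * int (wj (cs!p)) = int (wj (cs!(p-1))) + int (wj (cs!Suc p))) \<and>
    (\<forall>p. Suc p < length cs \<longrightarrow> 0 < wi (cs!p)) \<and>
    (\<forall>p. 0 < p \<longrightarrow> p < length cs \<longrightarrow> 0 < wj (cs!p))"

lemma cinv_blowup:
  assumes I: "cinv (xs @ [(a, b, m), (c, d, n)] @ ys)"
  shows "cinv (xs @ [(a, b, m + 1), (a + c, b + d, 1), (c, d, n + 1)] @ ys)"
proof -
  from I have I: "cinv (xs @ (a, b, m) # (c, d, n) # ys)" by simp
  let ?L = "xs @ (a, b, m) # (c, d, n) # ys"
  let ?L' = "xs @ (a, b, m + 1) # (a + c, b + d, 1) # (c, d, n + 1) # ys"
  let ?h = "length xs"
  have len: "length ?L' = Suc (length ?L)" by simp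
  have L: "?L ! p = (if p < ?h then xs!p else if p = ?h then (a,b,m) else if p = Suc ?h then (c,d,n)
     else ys!(p - ?h - 2))" for p
    by (auto simp: nth_append nth_Cons split: nat.split intro!: arg_cong[where f="(!) ys"])
  have L': "?L' ! p = (if p < ?h then xs!p else if p = ?h then (a,b,m+1) else if p = Suc ?h then (a+c,b+d,1)
     else if p = Suc (Suc ?h) then (c,d,n+1) else ys!(p - ?h - 3))" for p
    by (auto simp: nth_append nth_Cons split: nat.split intro!: arg_cong[where f="(!) ys"])
  have S: "?L'!(Suc q) = ?L!q" if "Suc (Suc ?h) \<le> q" for q
    using that unfolding L L' by (simp add: numeral_eq_Suc)
  have I1: "\<And>p. Suc p < length ?L \<Longrightarrow> cr (?L!p) (?L!Suc p) = 1"
    and I2: "\<And>p. 0 < p \<Longrightarrow> Suc p < length ?L \<Longrightarrow>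
        mark (?L!p) * int (wi (?L!p)) = int (wi (?L!(p-1))) + int (wi (?L!Suc p)) \<and>
        mark (?L!p) * int (wj (?L!p)) = int (wj (?L!(p-1))) + int (wj (?L!Suc p))"
    and I3: "\<And>p. Suc p < length ?L \<Longrightarrow> 0 < wi (?L!p)"
    and I4: "\<And>p. 0 < p \<Longrightarrow> p < length ?L \<Longrightarrow> 0 < wj (?L!p)"
    using I unfolding cinv_def by blast+
  have c0: "cr (a,b,m) (c,d,n) = 1" using I1[of ?h] by (simp add: L)
  have ai: "0 < a" using I3[of ?h] by (simp add: L wi_def)
  have dj: "0 < d" using I4[of "Suc ?h"] by (simp add: L wj_def)
  have C: "cr (?L'!p) (?L'!Suc p) = 1" if p: "Suc p < length ?L'" for p
  proof -
    consider "Suc p < ?h" | "Suc p = ?h" | "p = ?h" | "p = Suc ?h" | "Suc (Suc ?h) \<le> p" by linarith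
    then show ?thesis
    proof cases
      case 1 then show ?thesis using I1[of p] by (simp add: L L')
    next
      case 2 then show ?thesis using I1[of p] by (simp add: L L' cr_def wi_def wj_def)
    next
      case 3 then show ?thesis using c0 unfolding L L' by (simp add: cr_def wi_def wj_def algebra_simps)
    next
      case 4 then show ?thesis using c0 unfolding L L' by (simp add: cr_def wi_def wj_def algebra_simps)
    next
      case 5
      then have "Suc (p - 1) < length ?L" "p - 1 \<ge> Suc ?h" using p by auto
      then show ?thesis using 5 I1[of "p - 1"]
        by (auto simp: L L' cr_def wi_def wj_def numeral_eq_Suc split: if_splits)
    qed
  qed
  have M: "mark (?L'!p) * int (wi (?L'!p)) = int (wi (?L'!(p-1))) + int (wi (?L'!Suc p)) \<and>
        mark (?L'!p) * int (wj (?L'!p)) = int (wj (?L'!(p-1))) + int (wj (?L'!Suc p))"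
    if p0: "0 < p" and p: "Suc p < length ?L'" for p
  proof -
    consider "Suc p < ?h" | "Suc p = ?h" | "p = ?h" | "p = Suc ?h" | "p = Suc (Suc ?h)" | "Suc (Suc (Suc ?h)) \<le> p" by linarith
    then show ?thesis
    proof cases
      case 1
      then have "p - 1 < ?h" "p < ?h" by auto
      then show ?thesis using I2[of p] p0 1 unfolding L L' by simp
    next
      case 2
      then have "p - 1 < ?h" "p < ?h" "Suc p = ?h" by auto
      then show ?thesis using I2[of p] p0 unfolding L L' by (simp add: wi_def wj_def)
    next
      case 3 then show ?thesis using I2[of p] p0 unfolding L L' by (simp add: wi_def wj_def mark_def algebra_simps)
    next
      case 4 then show ?thesis unfolding L L' by (simp add: wi_def wj_def mark_def algebra_simps)
    next
      case 5
      then have "Suc (Suc ?h) < length ?L" using p by simp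
      then show ?thesis using I2[of "Suc ?h"] 5 unfolding L L' by (simp add: wi_def wj_def mark_def algebra_simps)
    next
      case 6
      have W: "wi (?L'!q) = wi (?L!(q-1)) \<and> wj (?L'!q) = wj (?L!(q-1))" if "Suc (Suc ?h) \<le> q" for q
      proof (cases "q = Suc (Suc ?h)")
        case True then show ?thesis unfolding L L' by (simp add: wi_def wj_def)
      next
        case False then have "q = Suc (q - 1)" "Suc (Suc ?h) \<le> q - 1" using that by auto
        then show ?thesis using S[of "q - 1"] by metis
      qed
      obtain q where q: "p = Suc q" "Suc (Suc ?h) \<le> q" using 6 by (cases p) auto
      have "Suc q < length ?L" "0 < q" using p q by auto
      then have "mark (?L!q) * int (wi (?L!q)) = int (wi (?L!(q-1))) + int (wi (?L!Suc q)) \<and>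
        mark (?L!q) * int (wj (?L!q)) = int (wj (?L!(q-1))) + int (wj (?L!Suc q))"
        using I2[of q] by blast
      moreover have "?L'!p = ?L!q" "?L'!Suc p = ?L!Suc q" using S q by auto
      moreover have "wi (?L'!(p-1)) = wi (?L!(q-1)) \<and> wj (?L'!(p-1)) = wj (?L!(q-1))" using W q by simp
      ultimately show ?thesis by simp
    qed
  qed
  have P: "0 < wi (?L'!p)" if p: "Suc p < length ?L'" for p
  proof -
    consider "p < ?h" | "p = ?h" | "p = Suc ?h" | "p = Suc (Suc ?h)" | "Suc (Suc (Suc ?h)) \<le> p" by linarith
    then show ?thesis
    proof cases
      case 1 then show ?thesis using I3[of p] unfolding L L' by simp
    next
      case 2 then show ?thesis using ai unfolding L L' by (simp add: wi_def)
    next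
      case 3 then show ?thesis using ai unfolding L L' by (simp add: wi_def)
    next
      case 4 then show ?thesis using I3[of "Suc ?h"] p unfolding L L' by (simp add: wi_def)
    next
      case 5
      then obtain q where q: "p = Suc q" "Suc (Suc ?h) \<le> q" by (cases p) auto
      then show ?thesis using I3[of q] p S[of q] by simp
    qed
  qed
  have Q: "0 < wj (?L'!p)" if p0: "0 < p" and p: "p < length ?L'" for p
  proof -
    consider "p < ?h" | "p = ?h" | "p = Suc ?h" | "p = Suc (Suc ?h)" | "Suc (Suc (Suc ?h)) \<le> p" by linarith
    then show ?thesis
    proof cases
      case 1 then show ?thesis using I4[of p] p0 unfolding L L' by simp
    next
      case 2 then show ?thesis using I4[of p] p0 unfolding L L' by (simp add: wj_def)
    next
      case 3 then show ?thesis using dj unfolding L L' by (simp add: wj_def)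
    next
      case 4 then show ?thesis using dj unfolding L L' by (simp add: wj_def)
    next
      case 5
      then obtain q where q: "p = Suc q" "Suc (Suc ?h) \<le> q" by (cases p) auto
      then show ?thesis using I4[of q] p S[of q] by simp
    qed
  qed
  have "cinv ?L'" unfolding cinv_def using C M P Q by simp
  then show ?thesis by simp
qed

lemma cinv_cong:
  assumes I: "cinv cs" and len: "length cs' = length cs"
    and W: "\<And>p. p < length cs \<Longrightarrow> wi (cs'!p) = wi (cs!p) \<and> wj (cs'!p) = wj (cs!p)"
    and M: "\<And>p. 0 < p \<Longrightarrow> Suc p < length cs \<Longrightarrow> mark (cs'!p) = mark (cs!p)"
  shows "cinv cs'"
proof -
  have C: "cr (cs'!p) (cs'!Suc p) = cr (cs!p) (cs!Suc p)" if "Suc p < length cs" for p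
    using W[of p] W[of "Suc p"] that by (simp add: cr_def)
  have I1: "\<And>p. Suc p < length cs \<Longrightarrow> cr (cs!p) (cs!Suc p) = 1"
    and I2: "\<And>p. 0 < p \<Longrightarrow> Suc p < length cs \<Longrightarrow>
        mark (cs!p) * int (wi (cs!p)) = int (wi (cs!(p-1))) + int (wi (cs!Suc p)) \<and>
        mark (cs!p) * int (wj (cs!p)) = int (wj (cs!(p-1))) + int (wj (cs!Suc p))"
    and I3: "\<And>p. Suc p < length cs \<Longrightarrow> 0 < wi (cs!p)"
    and I4: "\<And>p. 0 < p \<Longrightarrow> p < length cs \<Longrightarrow> 0 < wj (cs!p)"
    and I0: "2 \<le> length cs"
    using I unfolding cinv_def by blast+
  have M2: "mark (cs'!p) * int (wi (cs'!p)) = int (wi (cs'!(p-1))) + int (wi (cs'!Suc p)) \<and>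
        mark (cs'!p) * int (wj (cs'!p)) = int (wj (cs'!(p-1))) + int (wj (cs'!Suc p))"
    if "0 < p" "Suc p < length cs" for p
    using I2[OF that] M[OF that] W[of p] W[of "p-1"] W[of "Suc p"] that by simp
  show ?thesis unfolding cinv_def len using I0 I1 I3 I4 C M2 W by simp
qed

lemma cinv_chain: "chain_over_P cs \<Longrightarrow> cinv cs"
proof (induction rule: chain_over_P.induct)
  case init
  show ?case unfolding cinv_def cr_def by (simp add: wi_def wj_def less_Suc_eq)
next
  case (blowup xs a b m c d n ys)
  then show ?case using cinv_blowup by blast
next
  case (blowup_Li a b m xs)
  show ?case
  proof (rule cinv_cong[OF blowup_Li.IH])
    fix p show "wi (((a, b, m + 1) # xs)!p) = wi (((a, b, m) # xs)!p) \<and> wj (((a, b, m + 1) # xs)!p) = wj (((a, b, m) # xs)!p)"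
      by (cases p) (auto simp: wi_def wj_def)
  next
    fix p :: nat assume "0 < p" then show "mark (((a, b, m + 1) # xs)!p) = mark (((a, b, m) # xs)!p)"
      by (cases p) auto
  qed simp
next
  case (blowup_Lj xs a b m)
  show ?case
  proof (rule cinv_cong[OF blowup_Lj.IH])
    fix p assume "p < length (xs @ [(a, b, m)])"
    then show "wi ((xs @ [(a, b, m + 1)])!p) = wi ((xs @ [(a, b, m)])!p) \<and> wj ((xs @ [(a, b, m + 1)])!p) = wj ((xs @ [(a, b, m)])!p)"
      by (auto simp: wi_def wj_def nth_append)
  next
    fix p :: nat assume "Suc p < length (xs @ [(a, b, m)])"
    then show "mark ((xs @ [(a, b, m + 1)])!p) = mark ((xs @ [(a, b, m)])!p)"
      by (auto simp: nth_append)
  qed simp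
qed


lemma cr_step:
  fixes m x0 x1 x2 y0 y1 y2 xl yl :: int
  assumes "m * x1 = x0 + x2" "m * y1 = y0 + y2"
  shows "x0 * yl - y0 * xl = m * (x1 * yl - y1 * xl) - (x2 * yl - y2 * xl)"
proof -
  have h1: "x0 = m * x1 - x2" "y0 = m * y1 - y2" using assms by simp_all
  have "x0 * yl - y0 * xl = (m * x1 - x2) * yl - (m * y1 - y2) * xl" by (simp only: h1)
  also have "\<dots> = m * (x1 * yl - y1 * xl) - (x2 * yl - y2 * xl)" by (simp add: algebra_simps)
  finally show ?thesis .
qed

lemma det_between:
  assumes I: "cinv cs" and l: "l < length cs"
  shows "p < l \<Longrightarrow> det (chain_matrix (map (\<lambda>i. mark (cs!i)) [Suc p..<l])) = cr (cs!p) (cs!l)"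
proof (induction "l - p" arbitrary: p rule: less_induct)
  case less
  have I1: "\<And>p. Suc p < length cs \<Longrightarrow> cr (cs!p) (cs!Suc p) = 1"
    and I2: "\<And>p. 0 < p \<Longrightarrow> Suc p < length cs \<Longrightarrow>
        mark (cs!p) * int (wi (cs!p)) = int (wi (cs!(p-1))) + int (wi (cs!Suc p)) \<and>
        mark (cs!p) * int (wj (cs!p)) = int (wj (cs!(p-1))) + int (wj (cs!Suc p))"
    using I unfolding cinv_def by blast+
  have step: "cr (cs!p) (cs!l) = mark (cs!Suc p) * cr (cs!Suc p) (cs!l) - cr (cs!Suc (Suc p)) (cs!l)"
    if "Suc (Suc p) < length cs" for p
  proof -
    have e1: "mark (cs!Suc p) * int (wi (cs!Suc p)) = int (wi (cs!p)) + int (wi (cs!Suc (Suc p)))"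
      and e2: "mark (cs!Suc p) * int (wj (cs!Suc p)) = int (wj (cs!p)) + int (wj (cs!Suc (Suc p)))"
      using I2[of "Suc p"] that by simp_all
    show ?thesis unfolding cr_def by (rule cr_step[OF e1 e2])
  qed
  consider "Suc p = l" | "Suc (Suc p) = l" | "Suc (Suc p) < l" using less.prems by linarith
  then show ?case
  proof cases
    case 1 then show ?thesis using I1[of p] l by (simp add: det_chain_Nil)
  next
    case 2
    have "[Suc p..<l] = [Suc p]" by (simp add: 2[symmetric])
    then show ?thesis using step[of p] I1[of "Suc p"] 2 l by (simp add: det_chain_single cr_def)
  next
    case 3
    have e: "[Suc p..<l] = Suc p # Suc (Suc p) # [Suc (Suc (Suc p))..<l]" using 3
      by (simp add: upt_conv_Cons)
    have "det (chain_matrix (map (\<lambda>i. mark (cs!i)) [Suc p..<l])) =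
      mark (cs!Suc p) * det (chain_matrix (map (\<lambda>i. mark (cs!i)) [Suc (Suc p)..<l]))
      - det (chain_matrix (map (\<lambda>i. mark (cs!i)) [Suc (Suc (Suc p))..<l]))"
      unfolding e using 3 by (simp add: det_chain_cons2 upt_conv_Cons)
    also have "\<dots> = mark (cs!Suc p) * cr (cs!Suc p) (cs!l) - cr (cs!Suc (Suc p)) (cs!l)"
      using less.hyps[of "Suc p"] less.hyps[of "Suc (Suc p)"] 3 by simp
    also have "\<dots> = cr (cs!p) (cs!l)" using step[of p] 3 l by simp
    finally show ?thesis .
  qed
qed

lemma slope_mono:
  assumes I: "cinv cs"
  shows "q < length cs - 1 \<Longrightarrow> p < q \<Longrightarrow>
    real (wj (cs!p)) / real (wi (cs!p)) < real (wj (cs!q)) / real (wi (cs!q))"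
proof (induction q)
  case 0 then show ?case by simp
next
  case (Suc q)
  have I1: "\<And>p. Suc p < length cs \<Longrightarrow> cr (cs!p) (cs!Suc p) = 1"
    and I3: "\<And>p. Suc p < length cs \<Longrightarrow> 0 < wi (cs!p)"
    using I unfolding cinv_def by blast+
  have a: "0 < wi (cs!q)" "0 < wi (cs!Suc q)" using I3[of q] I3[of "Suc q"] Suc.prems by auto
  have "Suc q < length cs" using Suc.prems by simp
  then have "int (wj (cs!q)) * int (wi (cs!Suc q)) < int (wj (cs!Suc q)) * int (wi (cs!q))"
    using I1[of q] mult.commute[of "int (wj (cs!Suc q))" "int (wi (cs!q))"] unfolding cr_def by linarith
  then have "wj (cs!q) * wi (cs!Suc q) < wj (cs!Suc q) * wi (cs!q)"
    by (simp only: of_nat_mult[symmetric] of_nat_less_iff)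
  then have "real (wj (cs!q) * wi (cs!Suc q)) < real (wj (cs!Suc q) * wi (cs!q))"
    by (simp only: of_nat_less_iff)
  then have "real (wj (cs!q)) * real (wi (cs!Suc q)) < real (wj (cs!Suc q)) * real (wi (cs!q))"
    by (simp only: of_nat_mult)
  then have s: "real (wj (cs!q)) / real (wi (cs!q)) < real (wj (cs!Suc q)) / real (wi (cs!Suc q))"
  proof -
    let ?x = "real (wj (cs!q))" and ?y = "real (wi (cs!q))" and ?z = "real (wj (cs!Suc q))" and ?w = "real (wi (cs!Suc q))"
    have y: "?y > 0" and w: "?w > 0" using a by auto
    have e1: "?x / ?y = (?x * ?w) / (?y * ?w)" using w by simp
    have e2: "?z / ?w = (?z * ?y) / (?y * ?w)" using y by simp
    have "(?x * ?w) / (?y * ?w) < (?z * ?y) / (?y * ?w)"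
      using \<open>?x * ?w < ?z * ?y\<close> y w by (intro divide_strict_right_mono) auto
    then show ?thesis using e1 e2 by simp
  qed
  show ?case
  proof (cases "p = q")
    case True then show ?thesis using s by simp
  next
    case False then show ?thesis using Suc s by simp
  qed
qed

theorem lemma3p11:
  fixes cs :: "vcurve list" and k l :: nat
  assumes "chain_over_P cs"
    and "0 < k" and "k < length cs - 1"
    and "0 < l" and "l < length cs - 1"
    and "real (wj (cs ! k)) / real (wi (cs ! k)) < real (wj (cs ! l)) / real (wi (cs ! l))"
  shows "chain_det (strictly_between cs k l)
           = int (wi (cs ! k)) * int (wj (cs ! l)) - int (wj (cs ! k)) * int (wi (cs ! l))
       \<and> real_of_int (int (wi (cs ! k)) * int (wj (cs ! l)) - int (wj (cs ! k)) * int (wi (cs ! l)))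
           = (real (wi (cs ! k)) / real (wj (cs ! k)) - real (wi (cs ! l)) / real (wj (cs ! l)))
             * real (wj (cs ! k)) * real (wj (cs ! l))"
proof
  have I: "cinv cs" using assms(1) by (rule cinv_chain)
  have kl: "k < l"
  proof (rule ccontr)
    assume "\<not> k < l"
    then have "l = k \<or> l < k" by auto
    then show False using slope_mono[OF I, of k l] assms(3,6) by auto
  qed
  have "chain_det (strictly_between cs k l) = det (chain_matrix (map (\<lambda>i. mark (cs!i)) [Suc k..<l]))"
    unfolding chain_det_def using strictly_between_eq[OF kl, of cs] assms(5) by (simp add: comp_def)
  also have "\<dots> = cr (cs!k) (cs!l)" using det_between[OF I _ kl] assms(5) by simp
  finally show "chain_det (strictly_between cs k l)
           = int (wi (cs ! k)) * int (wj (cs ! l)) - int (wj (cs ! k)) * int (wi (cs ! l))"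
    by (simp add: cr_def)
next
  have I: "cinv cs" using assms(1) by (rule cinv_chain)
  have I4: "\<And>p. 0 < p \<Longrightarrow> p < length cs \<Longrightarrow> 0 < wj (cs!p)"
    using I unfolding cinv_def by blast
  have "0 < wj (cs!k)" "0 < wj (cs!l)" using I4[of k] I4[of l] assms(2-5) by auto
  then show "real_of_int (int (wi (cs ! k)) * int (wj (cs ! l)) - int (wj (cs ! k)) * int (wi (cs ! l)))
           = (real (wi (cs ! k)) / real (wj (cs ! k)) - real (wi (cs ! l)) / real (wj (cs ! l)))
             * real (wj (cs ! k)) * real (wj (cs ! l))"
    by (simp add: field_simps)
qed

end
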